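(* Let $X$ and $Y$ be real Hilbert spaces with $X \neq \{0\}$, let $a$ and $b$ be continuous bilinear forms on $X \times Y$, and let $A, B : X \to Y$ be continuous linear operators. Suppose there are constants $C_1 > 0$ and $C_2 \geq 0$ such that for all $u \in X$: $$b(u, B u) + a(u, A u) \geq \frac{1}{C_1} \| u\|^2,$$ $$b(u, A u) \geq 0, \qquad |a(u, B u)| \leq C_2\, a(u, Au).$$ Then $b+a$ satisfies an inf-sup condition on $X \times Y$: there exists $c > 0$ such that $$\inf_{u \in X\setminus\{0\}} \ \sup_{v \in Y\setminus\{0\}} \frac{|(b+a)(u,v)|}{\| u \| \, \|v\| } \geq c.$$ *)

theory Defs
  imports "HOL-Analysis.Analysis"
begin

end

theory Submission
  imports Defs
begin

theorem proposition2:
  fixes a b :: "'x::{real_inner,complete_space} \<Rightarrow> 'y::{real_inner,complete_space} \<Rightarrow> real"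
    and A B :: "'x \<Rightarrow> 'y"
    and C1 C2 :: real
  assumes X_nontriv: "\<exists>x::'x. x \<noteq> 0"
    and a_bil: "bounded_bilinear a" and b_bil: "bounded_bilinear b"
    and A_lin: "bounded_linear A" and B_lin: "bounded_linear B"
    and C1_pos: "C1 > 0" and C2_nonneg: "C2 \<ge> 0"
    and coer: "\<And>u. b u (B u) + a u (A u) \<ge> (1 / C1) * (norm u)\<^sup>2"
    and bA: "\<And>u. b u (A u) \<ge> 0"
    and aB: "\<And>u. \<bar>a u (B u)\<bar> \<le> C2 * a u (A u)"
  shows "\<exists>c>0. (INF u\<in>UNIV - {0}. SUP v\<in>UNIV - {0}.
              \<bar>b u v + a u v\<bar> / (norm u * norm v)) \<ge> c"
proof -
  obtain KA where KA: "KA > 0" "\<And>x. norm (A x) \<le> norm x * KA"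
    using bounded_linear.pos_bounded[OF A_lin] by blast
  obtain KB where KB: "KB > 0" "\<And>x. norm (B x) \<le> norm x * KB"
    using bounded_linear.pos_bounded[OF B_lin] by blast
  obtain Ka where Ka: "Ka > 0" "\<And>x y. norm (a x y) \<le> norm x * norm y * Ka"
    using bounded_bilinear.pos_bounded[OF a_bil] by blast
  obtain Kb where Kb: "Kb > 0" "\<And>x y. norm (b x y) \<le> norm x * norm y * Kb"
    using bounded_bilinear.pos_bounded[OF b_bil] by blast
  define K where "K = KB + (1 + C2) * KA"
  have Kpos: "K > 0" unfolding K_def using KA KB C2_nonneg
    by (smt (verit) mult_nonneg_nonneg)
  define c where "c = 1 / (C1 * K)"
  have cpos: "c > 0" unfolding c_def using Kpos C1_pos by simp
  have bdd: "bdd_above ((\<lambda>v. \<bar>b u v + a u v\<bar> / (norm u * norm v)) ` (UNIV - {0}))" for u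
  proof (rule bdd_aboveI2)
    fix v :: 'y
    assume "v \<in> UNIV - {0}"
    show "\<bar>b u v + a u v\<bar> / (norm u * norm v) \<le> Ka + Kb"
    proof (cases "u = 0")
      case True then show ?thesis using Ka Kb by simp
    next
      case False
      have nz: "norm u * norm v > 0" using False \<open>v \<in> UNIV - {0}\<close> by simp
      have "\<bar>b u v + a u v\<bar> \<le> norm u * norm v * Kb + norm u * norm v * Ka"
        using Ka(2)[of u v] Kb(2)[of u v] by simp
      also have "\<dots> = (Ka + Kb) * (norm u * norm v)" by (simp add: algebra_simps)
      finally show ?thesis using nz by (simp add: divide_le_eq)
    qed
  qed
  have each: "c \<le> (SUP v\<in>UNIV - {0}. \<bar>b u v + a u v\<bar> / (norm u * norm v))"
    if u0: "u \<noteq> 0" for u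
  proof -
    define v where "v = B u + (1 + C2) *\<^sub>R A u"
    have eq: "b u v + a u v = (b u (B u) + a u (A u)) + (a u (B u) + C2 * a u (A u))
        + (1 + C2) * b u (A u)"
      unfolding v_def
      by (simp add: bounded_bilinear.add_right[OF a_bil] bounded_bilinear.add_right[OF b_bil]
          bounded_bilinear.scaleR_right[OF a_bil] bounded_bilinear.scaleR_right[OF b_bil] algebra_simps)
    have "a u (B u) + C2 * a u (A u) \<ge> 0" using aB[of u] by linarith
    moreover have "(1 + C2) * b u (A u) \<ge> 0" using bA[of u] C2_nonneg by simp
    ultimately have low: "b u v + a u v \<ge> (1 / C1) * (norm u)\<^sup>2"
      using eq coer[of u] by linarith
    have nu: "norm u > 0" using u0 by simp
    have lowpos: "(1 / C1) * (norm u)\<^sup>2 > 0" using nu C1_pos by simp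
    have nv: "norm v \<le> K * norm u"
    proof -
      have "norm v \<le> norm (B u) + (1 + C2) * norm (A u)"
        unfolding v_def using norm_triangle_ineq[of "B u" "(1 + C2) *\<^sub>R A u"] C2_nonneg by simp
      also have "\<dots> \<le> norm u * KB + (1 + C2) * (norm u * KA)"
        using KA(2)[of u] KB(2)[of u] C2_nonneg by (intro add_mono mult_left_mono) auto
      finally show ?thesis unfolding K_def by (simp add: algebra_simps)
    qed
    have v0: "v \<noteq> 0"
    proof
      assume "v = 0"
      then have "b u v + a u v = 0"
        by (simp add: bounded_bilinear.zero_right[OF a_bil] bounded_bilinear.zero_right[OF b_bil])
      then show False using low lowpos by linarith
    qed
    have nvp: "norm v > 0" using v0 by simp
    have "c \<le> \<bar>b u v + a u v\<bar> / (norm u * norm v)"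
    proof -
      have "c * (norm u * norm v) \<le> c * (norm u * (K * norm u))"
        using cpos nu nv by (intro mult_left_mono) auto
      also have "\<dots> = (1 / C1) * (norm u)\<^sup>2"
        unfolding c_def using Kpos C1_pos by (simp add: power2_eq_square field_simps)
      also have "\<dots> \<le> \<bar>b u v + a u v\<bar>" using low by linarith
      finally show ?thesis using nu nvp by (simp add: le_divide_eq)
    qed
    then show ?thesis
      using v0 by (intro cSUP_upper2[OF bdd[of u]]) auto
  qed
  have "c \<le> (INF u\<in>UNIV - {0}. SUP v\<in>UNIV - {0}.
              \<bar>b u v + a u v\<bar> / (norm u * norm v))"
    using X_nontriv each by (intro cINF_greatest) auto
  then show ?thesis using cpos by blast
qed

end
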